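(* Let $\rho\in\mathcal{D}(\mathbb{C}^m\otimes\mathbb{C}^n)$ be a separable state. Then for any $w,y\in[m]$ and $x,z\in[n]$, $$|\langle wx|\rho|yz\rangle|\le\sqrt{\min\big(\langle wx|\rho|wx\rangle,\langle wz|\rho|wz\rangle,\langle yx|\rho|yx\rangle,\langle yz|\rho|yz\rangle\big)},$$ and moreover $$|\langle wx|\rho|yz\rangle|\le\tfrac12\min\big(\langle wx|\rho|wx\rangle+\langle yz|\rho|yz\rangle,\ \langle wz|\rho|wz\rangle+\langle yx|\rho|yx\rangle\big).$$
   Context: $\mathcal{D}(\mathcal{H})$ denotes the set of density matrices on $\mathcal{H}$; $|wx\rangle=|w\rangle\otimes|x\rangle$ denotes computational basis vectors. A state is separable if it is a convex combination of product states $M\otimes N$ with $M,N$ density matrices. *)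

theory Defs
  imports "HOL-Analysis.Analysis"
begin

text \<open>Matrices on a finite-dimensional Hilbert space with computational basis indexed
  by a finite type 'a: complex ^ 'a ^ 'a, entry A $ i $ j = <i|A|j>.\<close>

definition density_matrix :: "complex ^ 'a::finite ^ 'a \<Rightarrow> bool" where
  "density_matrix A \<longleftrightarrow>
     (\<forall>i j. A $ i $ j = cnj (A $ j $ i)) \<and>
     (\<forall>v :: complex ^ 'a. 0 \<le> Re (\<Sum>i\<in>UNIV. \<Sum>j\<in>UNIV. cnj (v $ i) * A $ i $ j * v $ j)) \<and>
     (\<Sum>i\<in>UNIV. A $ i $ i) = 1"

text \<open>Kronecker (tensor) product; basis of C^m (x) C^n indexed by pairs (w,x) = |wx>.\<close>
definition kron :: "complex ^ 'a::finite ^ 'a \<Rightarrow> complex ^ 'b::finite ^ 'b \<Rightarrow> complex ^ ('a \<times> 'b) ^ ('a \<times> 'b)" where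
  "kron M N = (\<chi> p q. M $ fst p $ fst q * N $ snd p $ snd q)"

definition separable :: "complex ^ ('a::finite \<times> 'b::finite) ^ ('a \<times> 'b) \<Rightarrow> bool" where
  "separable \<rho> \<longleftrightarrow>
     (\<exists>(k::nat) (p::nat \<Rightarrow> real) (M::nat \<Rightarrow> complex ^ 'a ^ 'a) (N::nat \<Rightarrow> complex ^ 'b ^ 'b).
        (\<forall>i<k. 0 \<le> p i \<and> density_matrix (M i) \<and> density_matrix (N i)) \<and>
        (\<Sum>i<k. p i) = 1 \<and>
        \<rho> = (\<Sum>i<k. p i *\<^sub>R kron (M i) (N i)))"

end

theory Submission imports Defs begin

lemma dm_diag:
  assumes "density_matrix (M :: complex ^ 'a::finite ^ 'a)"
  shows "M$i$i = complex_of_real (Re (M$i$i)) \<and> 0 \<le> Re (M$i$i) \<and> Re (M$i$i) \<le> 1"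
proof -
  have h: "\<And>i j. M $ i $ j = cnj (M $ j $ i)"
    and q: "\<And>v :: complex ^ 'a. 0 \<le> Re (\<Sum>i\<in>UNIV. \<Sum>j\<in>UNIV. cnj (v $ i) * M $ i $ j * v $ j)"
    and t: "(\<Sum>i\<in>UNIV. M $ i $ i) = 1"
    using assms unfolding density_matrix_def by blast+
  have im: "\<And>k. Im (M$k$k) = 0" using h by (metis cnj.sel(2) neg_equal_zero)
  hence r: "\<And>k. M$k$k = complex_of_real (Re (M$k$k))" by (simp add: complex_eq_iff)
  have nn: "\<And>k. 0 \<le> Re (M$k$k)"
  proof -
    fix k
    have "0 \<le> Re (\<Sum>i\<in>UNIV. \<Sum>j\<in>UNIV. cnj ((axis k 1 :: complex ^ 'a) $ i) * M $ i $ j * (axis k 1 :: complex ^ 'a) $ j)"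
      by (rule q)
    also have "(\<Sum>i\<in>UNIV. \<Sum>j\<in>UNIV. cnj ((axis k 1 :: complex ^ 'a) $ i) * M $ i $ j * (axis k 1 :: complex ^ 'a) $ j) = M$k$k"
      unfolding axis_def by (simp add: if_distrib[of cnj] if_distrib[of "\<lambda>x. x * _"] if_distrib[of "\<lambda>x. _ * x"] cong: if_cong)
    finally show "0 \<le> Re (M$k$k)" .
  qed
  have "(\<Sum>k\<in>UNIV. Re (M$k$k)) = 1" using t by (metis Re_sum one_complex.sel(1))
  moreover have "Re (M$i$i) \<le> (\<Sum>k\<in>UNIV. Re (M$k$k))"
    by (rule member_le_sum) (auto simp: nn)
  ultimately show ?thesis using r nn by auto
qed

lemma sum2r:
  fixes g :: "'a::finite \<Rightarrow> complex"
  assumes "i \<noteq> j"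
  shows "(\<Sum>l\<in>UNIV. g l * (if l = i then \<alpha> else if l = j then \<beta> else 0)) = g i * \<alpha> + g j * \<beta>"
proof -
  have "(\<Sum>l\<in>UNIV. g l * (if l = i then \<alpha> else if l = j then \<beta> else 0))
      = (\<Sum>l\<in>{i,j}. g l * (if l = i then \<alpha> else if l = j then \<beta> else 0))"
    by (rule sum.mono_neutral_right) auto
  then show ?thesis using assms by simp
qed

lemma sum2l:
  fixes g :: "'a::finite \<Rightarrow> complex"
  assumes "i \<noteq> j"
  shows "(\<Sum>l\<in>UNIV. cnj (if l = i then \<alpha> else if l = j then \<beta> else 0) * g l) = cnj \<alpha> * g i + cnj \<beta> * g j"
proof -
  have "(\<Sum>l\<in>UNIV. cnj (if l = i then \<alpha> else if l = j then \<beta> else 0) * g l)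
      = (\<Sum>l\<in>{i,j}. cnj (if l = i then \<alpha> else if l = j then \<beta> else 0) * g l)"
    by (rule sum.mono_neutral_right) auto
  then show ?thesis using assms by simp
qed

lemma dm_off:
  assumes "density_matrix (M :: complex ^ 'a::finite ^ 'a)"
  shows "(cmod (M$i$j))\<^sup>2 \<le> Re (M$i$i) * Re (M$j$j)"
proof (cases "i = j")
  case True
  then show ?thesis using dm_diag[OF assms, of i]
    by (metis cmod_power2 norm_of_real power2_eq_square real_sqrt_abs real_sqrt_le_iff abs_of_nonneg order_refl)
next
  case False
  have h: "\<And>i j. M $ i $ j = cnj (M $ j $ i)"
    and q: "\<And>v :: complex ^ 'a. 0 \<le> Re (\<Sum>i\<in>UNIV. \<Sum>j\<in>UNIV. cnj (v $ i) * M $ i $ j * v $ j)"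
    using assms unfolding density_matrix_def by blast+
  define m where "m = M$i$j"
  define a where "a = Re (M$i$i)"
  define b where "b = Re (M$j$j)"
  have Mii: "M$i$i = of_real a" and Mjj: "M$j$j = of_real b" 
    using dm_diag[OF assms] a_def b_def by auto
  have Mji: "M$j$i = cnj m" using h[of j i] m_def by simp
  have Q: "0 \<le> t\<^sup>2 * a + (cmod m)\<^sup>2 * b - 2 * t * (cmod m)\<^sup>2" for t :: real
  proof -
    define v :: "complex ^ 'a" where "v = (\<chi> k. if k = i then of_real t else if k = j then - cnj m else 0)"
    have vk: "v $ k = (if k = i then of_real t else if k = j then - cnj m else 0)" for k
      unfolding v_def by simp
    have inner: "(\<Sum>l\<in>UNIV. cnj (v $ k) * M $ k $ l * v $ l) = cnj (v $ k) * (M$k$i * of_real t + M$k$j * (- cnj m))" for k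
    proof -
      have "(\<Sum>l\<in>UNIV. cnj (v $ k) * M $ k $ l * v $ l) = cnj (v $ k) * (\<Sum>l\<in>UNIV. M $ k $ l * v $ l)"
        by (simp add: sum_distrib_left mult.assoc)
      also have "(\<Sum>l\<in>UNIV. M $ k $ l * v $ l) = M$k$i * of_real t + M$k$j * (- cnj m)"
        unfolding vk by (rule sum2r[OF False])
      finally show ?thesis .
    qed
    have "(\<Sum>k\<in>UNIV. \<Sum>l\<in>UNIV. cnj (v $ k) * M $ k $ l * v $ l)
        = (\<Sum>k\<in>UNIV. cnj (v $ k) * (M$k$i * of_real t + M$k$j * (- cnj m)))"
      by (simp only: inner)
    also have "\<dots> = cnj (of_real t) * (M$i$i * of_real t + M$i$j * (- cnj m)) + cnj (- cnj m) * (M$j$i * of_real t + M$j$j * (- cnj m))"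
      unfolding vk by (rule sum2l[OF False])
    also have "\<dots> = of_real (t\<^sup>2 * a + (cmod m)\<^sup>2 * b - 2 * t * (cmod m)\<^sup>2)"
    proof -
      have nm: "complex_of_real ((cmod m)\<^sup>2) = m * cnj m" by (rule complex_norm_square)
      show ?thesis
        unfolding Mii Mjj Mji m_def[symmetric] of_real_diff of_real_add of_real_mult nm
        by (simp add: power2_eq_square algebra_simps)
    qed
    finally show ?thesis using q[of v] by simp
  qed
  show ?thesis
  proof (cases "a = 0")
    case True
    have "(cmod m)\<^sup>2 = 0"
    proof (rule ccontr)
      assume ne: "(cmod m)\<^sup>2 \<noteq> 0"
      have "0 \<le> (cmod m)\<^sup>2 * b - 2 * (b + 1) * (cmod m)\<^sup>2" using Q[of "b+1"] True by simp
      moreover have "0 < (cmod m)\<^sup>2" using ne by simp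
      moreover have "0 \<le> b" using dm_diag[OF assms, of j] b_def by simp
      ultimately have "0 < (cmod m)\<^sup>2 * (b + 2)" by (intro mult_pos_pos) auto
      moreover have "(cmod m)\<^sup>2 * b - 2 * (b + 1) * (cmod m)\<^sup>2 = - ((cmod m)\<^sup>2 * (b + 2))"
        by (simp add: algebra_simps)
      ultimately show False using \<open>0 \<le> (cmod m)\<^sup>2 * b - 2 * (b + 1) * (cmod m)\<^sup>2\<close> by linarith
    qed
    then show ?thesis using True a_def b_def m_def by simp
  next
    case False
    have a0: "0 < a" using dm_diag[OF assms, of i] a_def False by simp
    have "0 \<le> ((cmod m)\<^sup>2 / a)\<^sup>2 * a + (cmod m)\<^sup>2 * b - 2 * ((cmod m)\<^sup>2 / a) * (cmod m)\<^sup>2"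
      by (rule Q)
    hence "0 \<le> (cmod m)\<^sup>2 * (a * b - (cmod m)\<^sup>2) / a"
      using a0 by (simp add: field_simps power2_eq_square)
    hence "0 \<le> (cmod m)\<^sup>2 * (a * b - (cmod m)\<^sup>2)" using a0
      by (simp add: zero_le_divide_iff)
    hence "(cmod m)\<^sup>2 = 0 \<or> (cmod m)\<^sup>2 \<le> a * b"
      by (metis diff_ge_0_iff_ge zero_le_mult_iff zero_le_power2 order_antisym_conv)
    then show ?thesis using a0 dm_diag[OF assms, of j] a_def b_def m_def
      by (metis mult_nonneg_nonneg order_less_imp_le)
  qed
qed

lemma sqrt_amgm: "0 \<le> u \<Longrightarrow> 0 \<le> v \<Longrightarrow> sqrt u * sqrt v \<le> (u + v) / 2"
proof -
  assume "0 \<le> u" "0 \<le> v"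
  have "0 \<le> (sqrt u - sqrt v)\<^sup>2" by simp
  thus ?thesis using \<open>0 \<le> u\<close> \<open>0 \<le> v\<close> by (simp add: power2_eq_square algebra_simps)
qed

theorem lemma4p3:
  fixes \<rho> :: "complex ^ ('m::finite \<times> 'n::finite) ^ ('m \<times> 'n)"
    and w y :: 'm and x z :: 'n
  assumes "density_matrix \<rho>" and "separable \<rho>"
  shows "cmod (\<rho> $ (w, x) $ (y, z)) \<le>
           sqrt (min (min (Re (\<rho> $ (w, x) $ (w, x))) (Re (\<rho> $ (w, z) $ (w, z))))
                     (min (Re (\<rho> $ (y, x) $ (y, x))) (Re (\<rho> $ (y, z) $ (y, z))))) \<and>
         cmod (\<rho> $ (w, x) $ (y, z)) \<le>
           (1/2) * min (Re (\<rho> $ (w, x) $ (w, x)) + Re (\<rho> $ (y, z) $ (y, z)))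
                       (Re (\<rho> $ (w, z) $ (w, z)) + Re (\<rho> $ (y, x) $ (y, x)))"
proof -
  obtain k :: nat and p M N where
    H: "\<forall>i<k. 0 \<le> (p i :: real) \<and> density_matrix (M i :: complex ^ 'm ^ 'm) \<and> density_matrix (N i :: complex ^ 'n ^ 'n)"
    and P1: "(\<Sum>i<k. p i) = 1"
    and R: "\<rho> = (\<Sum>i<k. p i *\<^sub>R kron (M i) (N i))"
    using assms(2) unfolding separable_def by blast
  have ent: "\<rho> $ (a,b) $ (c,d) = (\<Sum>i<k. of_real (p i) * (M i $a$c * N i $b$d))" for a c b d
    unfolding R sum_component vector_scaleR_component kron_def vec_lambda_beta fst_conv snd_conv
    by (simp add: scaleR_conv_of_real)
  define mw where "mw i = Re (M i $ w $ w)" for i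
  define my where "my i = Re (M i $ y $ y)" for i
  define nx where "nx i = Re (N i $ x $ x)" for i
  define nz where "nz i = Re (N i $ z $ z)" for i
  have pos: "0 \<le> p i" "0 \<le> mw i" "mw i \<le> 1" "0 \<le> my i" "my i \<le> 1"
     "0 \<le> nx i" "nx i \<le> 1" "0 \<le> nz i" "nz i \<le> 1" if "i < k" for i
    using H that dm_diag[of "M i" w] dm_diag[of "M i" y] dm_diag[of "N i" x] dm_diag[of "N i" z]
    unfolding mw_def my_def nx_def nz_def by auto
  have diag: "Re (\<rho> $ (a,b) $ (a,b)) = (\<Sum>i<k. p i * (Re (M i $a$a) * Re (N i $b$b)))" for a b
  proof -
    have "\<rho> $ (a,b) $ (a,b) = (\<Sum>i<k. of_real (p i * (Re (M i $a$a) * Re (N i $b$b))))"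
      unfolding ent
    proof (rule sum.cong[OF refl])
      fix i assume "i \<in> {..<k}"
      hence "M i $a$a = of_real (Re (M i $a$a))" "N i $b$b = of_real (Re (N i $b$b))"
        using H dm_diag by blast+
      thus "of_real (p i) * (M i $a$a * N i $b$b) = of_real (p i * (Re (M i $a$a) * Re (N i $b$b)))"
        by (metis of_real_mult)
    qed
    thus ?thesis by (simp add: Re_sum)
  qed
  define A where "A = (\<Sum>i<k. p i * (mw i * nx i))"
  define B where "B = (\<Sum>i<k. p i * (my i * nz i))"
  define C where "C = (\<Sum>i<k. p i * (mw i * nz i))"
  define D where "D = (\<Sum>i<k. p i * (my i * nx i))"
  have eA: "Re (\<rho> $ (w, x) $ (w, x)) = A" and eB: "Re (\<rho> $ (y, z) $ (y, z)) = B"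
   and eC: "Re (\<rho> $ (w, z) $ (w, z)) = C" and eD: "Re (\<rho> $ (y, x) $ (y, x)) = D"
    unfolding A_def B_def C_def D_def mw_def my_def nx_def nz_def diag by simp_all
  define g where "g i = sqrt (mw i * my i) * sqrt (nx i * nz i)" for i
  define S where "S = (\<Sum>i<k. p i * g i)"
  have g1: "g i = sqrt (mw i * nx i) * sqrt (my i * nz i)" for i
    unfolding g_def by (simp add: real_sqrt_mult[symmetric] ac_simps)
  have g2: "g i = sqrt (mw i * nz i) * sqrt (my i * nx i)" for i
    unfolding g_def by (simp add: real_sqrt_mult[symmetric] ac_simps)
  have le: "cmod (\<rho> $ (w, x) $ (y, z)) \<le> S"
  proof -
    have "cmod (\<rho> $ (w, x) $ (y, z)) \<le> (\<Sum>i<k. cmod (of_real (p i) * (M i $w$y * N i $x$z)))"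
      unfolding ent by (rule norm_sum)
    also have "\<dots> \<le> S" unfolding S_def
    proof (rule sum_mono)
      fix i assume i: "i \<in> {..<k}"
      have m: "cmod (M i $w$y) \<le> sqrt (mw i * my i)"
        using dm_off[of "M i" w y] H i unfolding mw_def my_def by (auto intro: real_le_rsqrt)
      have n: "cmod (N i $x$z) \<le> sqrt (nx i * nz i)"
        using dm_off[of "N i" x z] H i unfolding nx_def nz_def by (auto intro: real_le_rsqrt)
      have "cmod (of_real (p i) * (M i $w$y * N i $x$z)) = p i * (cmod (M i $w$y) * cmod (N i $x$z))"
        using pos(1)[of i] i by (simp add: norm_mult)
      also have "\<dots> \<le> p i * g i" unfolding g_def
        using pos[of i] i m n by (intro mult_left_mono mult_mono) auto
      finally show "cmod (of_real (p i) * (M i $w$y * N i $x$z)) \<le> p i * g i" .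
    qed
    finally show ?thesis .
  qed
  have S0: "0 \<le> S" unfolding S_def g_def using pos by (intro sum_nonneg) auto
  have le1: "(\<Sum>i<k. p i * (u i * v i)) \<le> 1" if "\<And>i. i < k \<Longrightarrow> 0 \<le> u i \<and> u i \<le> 1 \<and> 0 \<le> v i \<and> v i \<le> 1" for u v
  proof -
    have "(\<Sum>i<k. p i * (u i * v i)) \<le> (\<Sum>i<k. p i * 1)"
      using that pos by (intro sum_mono mult_left_mono) (auto intro: mult_le_one)
    thus ?thesis using P1 by simp
  qed
  have ge0: "0 \<le> (\<Sum>i<k. p i * (u i * v i))" if "\<And>i. i < k \<Longrightarrow> 0 \<le> u i \<and> 0 \<le> v i" for u v
    using that pos by (intro sum_nonneg) auto
  have cs: "S\<^sup>2 \<le> (\<Sum>i<k. p i * u i) * (\<Sum>i<k. p i * v i)"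
    if "\<And>i. i < k \<Longrightarrow> 0 \<le> u i \<and> 0 \<le> v i" "\<And>i. g i = sqrt (u i) * sqrt (v i)" for u v
  proof -
    have "S = (\<Sum>i<k. (sqrt (p i) * sqrt (u i)) * (sqrt (p i) * sqrt (v i)))"
      unfolding S_def
    proof (rule sum.cong[OF refl])
      fix i assume "i \<in> {..<k}"
      hence "sqrt (p i) * sqrt (p i) = p i" using pos by simp
      thus "p i * g i = sqrt (p i) * sqrt (u i) * (sqrt (p i) * sqrt (v i))"
        using that(2) by (metis mult.assoc mult.left_commute)
    qed
    also have "(\<Sum>i<k. (sqrt (p i) * sqrt (u i)) * (sqrt (p i) * sqrt (v i)))\<^sup>2
       \<le> (\<Sum>i<k. (sqrt (p i) * sqrt (u i))\<^sup>2) * (\<Sum>i<k. (sqrt (p i) * sqrt (v i))\<^sup>2)"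
      by (rule Cauchy_Schwarz_ineq_sum)
    also have "(\<Sum>i<k. (sqrt (p i) * sqrt (u i))\<^sup>2) = (\<Sum>i<k. p i * u i)"
      using that(1) pos by (intro sum.cong) (auto simp: power_mult_distrib)
    also have "(\<Sum>i<k. (sqrt (p i) * sqrt (v i))\<^sup>2) = (\<Sum>i<k. p i * v i)"
      using that(1) pos by (intro sum.cong) (auto simp: power_mult_distrib)
    finally show ?thesis by simp
  qed
  have am: "S \<le> ((\<Sum>i<k. p i * u i) + (\<Sum>i<k. p i * v i)) / 2"
    if "\<And>i. i < k \<Longrightarrow> 0 \<le> u i \<and> 0 \<le> v i" "\<And>i. g i = sqrt (u i) * sqrt (v i)" for u v
  proof -
    have "S \<le> (\<Sum>i<k. p i * ((u i + v i) / 2))" unfolding S_def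
    proof (rule sum_mono)
      fix i assume "i \<in> {..<k}"
      hence ik: "i < k" by simp
      have "g i \<le> (u i + v i) / 2"
        using that(2)[of i] sqrt_amgm[of "u i" "v i"] that(1)[OF ik] by simp
      thus "p i * g i \<le> p i * ((u i + v i) / 2)" using pos(1)[OF ik] by (rule mult_left_mono)
    qed
    also have "\<dots> = ((\<Sum>i<k. p i * u i) + (\<Sum>i<k. p i * v i)) / 2"
      by (simp add: sum_divide_distrib[symmetric] sum.distrib[symmetric] algebra_simps)
    finally show ?thesis .
  qed
  have A1: "0 \<le> A" "A \<le> 1" unfolding A_def using pos by (auto intro!: le1 ge0)
  have B1: "0 \<le> B" "B \<le> 1" unfolding B_def using pos by (auto intro!: le1 ge0)
  have C1: "0 \<le> C" "C \<le> 1" unfolding C_def using pos by (auto intro!: le1 ge0)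
  have D1: "0 \<le> D" "D \<le> 1" unfolding D_def using pos by (auto intro!: le1 ge0)
  have sAB: "S\<^sup>2 \<le> A * B" unfolding A_def B_def
    by (rule cs) (use pos g1 in \<open>auto intro: mult_nonneg_nonneg\<close>)
  have sCD: "S\<^sup>2 \<le> C * D" unfolding C_def D_def
    by (rule cs) (use pos g2 in \<open>auto intro: mult_nonneg_nonneg\<close>)
  have aAB: "S \<le> (A + B) / 2" unfolding A_def B_def
    by (rule am) (use pos g1 in \<open>auto intro: mult_nonneg_nonneg\<close>)
  have aCD: "S \<le> (C + D) / 2" unfolding C_def D_def
    by (rule am) (use pos g2 in \<open>auto intro: mult_nonneg_nonneg\<close>)
  have "A * B \<le> A" "A * B \<le> B" "C * D \<le> C" "C * D \<le> D"
    using A1 B1 C1 D1 by (auto intro: mult_left_le mult_left_le_one_le)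
  hence "S\<^sup>2 \<le> min (min A C) (min D B)" using sAB sCD by simp
  hence "S \<le> sqrt (min (min A C) (min D B))" by (rule real_le_rsqrt)
  moreover have "S \<le> (1/2) * min (A + B) (C + D)" using aAB aCD by simp
  ultimately show ?thesis unfolding eA eB eC eD using le by linarith
qed

end
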